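(* Let $(S,\mathcal{S})$ be a measurable space with $\Delta\in\mathcal{S}\otimes\mathcal{S}$ and let $\pi:\Omega \to C(S)$ be a constructive cr-set with independent increments. Then there exist finite measures $\mu_{n}:\mathcal{S}\to [0,\infty)$, $n\in\mathbb{N}$, such that $-\log(1-T_{\pi}(A))=\sum_{n\in\mathbb{N}}\mu_{n}(A)$ for all $A\in\mathcal{S}$ (with $-\log 0=\infty$).
   Context: $\Delta=\{(x,x)\mid x\in S\}$. $(\Omega,\mathcal{F},P)$ is a probability space; $C(S)$ is the set of countable subsets of $S$; $N_A(M)=|A\cap M|$; $\mathcal{C}(\mathcal{S})=\sigma(N_A\mid A\in\mathcal{S})$; a cr-set is an $\mathcal{F}$-$\mathcal{C}(\mathcal{S})$ measurable map $\Omega\to C(S)$, finite if its values are finite sets. A map $\tau:\Omega\to C(S)$ is constructive if $\tau(\omega)=\bigcup_k\pi_k(\omega)$ for all $\omega$ for some finite cr-sets $\pi_k$, $k\in\mathbb{N}$. A cr-set $\pi$ has independent increments if $N_{A_1}(\pi),\dots,N_{A_n}(\pi)$ are independent for all pairwise disjoint $A_1,\dots,A_n\in\mathcal{S}$. The hitting function is $T_\pi(A)=P(\pi\cap A\neq\emptyset)$, $A\in\mathcal{S}$. *)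

theory Defs
  imports "HOL-Probability.Probability"
begin

definition countable_subsets :: "'s measure \<Rightarrow> 's set set" where
  "countable_subsets M = {X. X \<subseteq> space M \<and> countable X}"

definition Ncount :: "'s set \<Rightarrow> 's set \<Rightarrow> enat" where
  "Ncount A X = (if finite (A \<inter> X) then enat (card (A \<inter> X)) else \<infinity>)"

text \<open>The measurable space (C(S), C(\<S>)): sigma-algebra generated by the maps N_A, A \<in> \<S>,
  where the target (extended naturals) carries the discrete sigma-algebra.\<close>
definition cr_space :: "'s measure \<Rightarrow> 's set measure" where
  "cr_space M = sigma (countable_subsets M)
     {{X \<in> countable_subsets M. Ncount A X \<in> B} | A B. A \<in> sets M \<and> B \<subseteq> (UNIV :: enat set)}"

definition cr_set :: "'w measure \<Rightarrow> 's measure \<Rightarrow> ('w \<Rightarrow> 's set) \<Rightarrow> bool" where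
  "cr_set P M \<pi> \<longleftrightarrow> \<pi> \<in> measurable P (cr_space M)"

definition finite_cr_set :: "'w measure \<Rightarrow> 's measure \<Rightarrow> ('w \<Rightarrow> 's set) \<Rightarrow> bool" where
  "finite_cr_set P M \<pi> \<longleftrightarrow> cr_set P M \<pi> \<and> (\<forall>\<omega>\<in>space P. finite (\<pi> \<omega>))"

definition constructive :: "'w measure \<Rightarrow> 's measure \<Rightarrow> ('w \<Rightarrow> 's set) \<Rightarrow> bool" where
  "constructive P M \<tau> \<longleftrightarrow>
     (\<exists>\<pi>s :: nat \<Rightarrow> 'w \<Rightarrow> 's set. (\<forall>k. finite_cr_set P M (\<pi>s k)) \<and>
        (\<forall>\<omega>\<in>space P. \<tau> \<omega> = (\<Union>k. \<pi>s k \<omega>)))"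

definition indep_increments :: "'w measure \<Rightarrow> 's measure \<Rightarrow> ('w \<Rightarrow> 's set) \<Rightarrow> bool" where
  "indep_increments P M \<pi> \<longleftrightarrow>
     (\<forall>(n::nat) (A :: nat \<Rightarrow> 's set). (\<forall>i<n. A i \<in> sets M) \<longrightarrow> disjoint_family_on A {..<n} \<longrightarrow>
        prob_space.indep_vars P (\<lambda>_. count_space (UNIV :: enat set))
          (\<lambda>i \<omega>. Ncount (A i) (\<pi> \<omega>)) {..<n})"

definition hitting :: "'w measure \<Rightarrow> ('w \<Rightarrow> 's set) \<Rightarrow> 's set \<Rightarrow> real" where
  "hitting P \<pi> A = measure P {\<omega> \<in> space P. \<pi> \<omega> \<inter> A \<noteq> {}}"

definition neglog1m :: "real \<Rightarrow> ennreal" where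
  "neglog1m t = (if 1 - t = 0 then \<infinity> else ennreal (- ln (1 - t)))"

end

theory Submission
  imports Defs
begin

lemma cr_space_space: "space (cr_space M) = countable_subsets M"
  unfolding cr_space_def by (rule space_measure_of) auto

lemma meas_N:
  assumes "cr_set P M \<pi>" "A \<in> sets M"
  shows "(\<lambda>\<omega>. Ncount A (\<pi> \<omega>)) \<in> measurable P (count_space UNIV)"
proof (rule measurableI)
  fix B :: "enat set" assume "B \<in> sets (count_space UNIV)"
  have pm: "\<pi> \<in> measurable P (cr_space M)" using assms(1) by (simp add: cr_set_def)
  let ?G = "{X \<in> countable_subsets M. Ncount A X \<in> B}"
  have G: "?G \<in> sets (cr_space M)" unfolding cr_space_def
    by (rule in_measure_of) (use assms(2) in auto)
  have "(\<lambda>\<omega>. Ncount A (\<pi> \<omega>)) -` B \<inter> space P = \<pi> -` ?G \<inter> space P"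
    using measurable_space[OF pm] by (auto simp: cr_space_space)
  then show "(\<lambda>\<omega>. Ncount A (\<pi> \<omega>)) -` B \<inter> space P \<in> sets P"
    using measurable_sets[OF pm G] by simp
qed simp

lemma Ncount_0: "Ncount A X = 0 \<longleftrightarrow> A \<inter> X = {}"
  unfolding Ncount_def by (auto simp: zero_enat_def)

lemma ev_E:
  assumes "cr_set P M \<pi>" "A \<in> sets M"
  shows "{\<omega>\<in>space P. \<pi> \<omega> \<inter> A = {}} \<in> sets P"
proof -
  have "{\<omega>\<in>space P. \<pi> \<omega> \<inter> A = {}} = (\<lambda>\<omega>. Ncount A (\<pi> \<omega>)) -` {0} \<inter> space P"
    by (auto simp: Ncount_0)
  then show ?thesis using measurable_sets[OF meas_N[OF assms], of "{0}"] by simp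
qed

lemma pi_sub:
  assumes "cr_set P M \<pi>" "\<omega> \<in> space P"
  shows "\<pi> \<omega> \<subseteq> space M" "countable (\<pi> \<omega>)"
  using measurable_space[of \<pi> P "cr_space M" \<omega>] assms
  by (auto simp: cr_set_def cr_space_space countable_subsets_def)


definition L :: "real \<Rightarrow> ennreal" where
  "L q = (if q = 0 then \<infinity> else ennreal (- ln q))"

lemma L_1[simp]: "L 1 = 0" by (simp add: L_def)

lemma L_mult:
  assumes "0 \<le> a" "a \<le> 1" "0 \<le> b" "b \<le> 1"
  shows "L (a*b) = L a + L b"
proof (cases "a = 0 \<or> b = 0")
  case True then show ?thesis by (auto simp: L_def)
next
  case False
  then have "a > 0" "b > 0" using assms by auto
  then have e1: "- ln (a*b) = - ln a + - ln b" by (simp add: ln_mult)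
  have e2: "- ln a \<ge> 0" "- ln b \<ge> 0" using \<open>a>0\<close> \<open>b>0\<close> assms by auto
  have "ennreal (- ln a) + ennreal (- ln b) = ennreal (- ln a + - ln b)"
      by (rule ennreal_plus[symmetric]) (use e2 in auto)
  then have "ennreal (- ln (a*b)) = ennreal (- ln a) + ennreal (- ln b)"
    using e1 by simp
  then show ?thesis using False \<open>a>0\<close> \<open>b>0\<close> by (simp add: L_def)
qed

lemma L_tendsto:
  assumes q: "q \<longlonglongrightarrow> x" and pos: "\<And>i. 0 \<le> q i" "0 \<le> x"
  shows "(\<lambda>i. L (q i)) \<longlonglongrightarrow> L x"
proof (cases "x = 0")
  case False
  then have "x > 0" using pos by auto
  then have ev: "eventually (\<lambda>i. q i > 0) sequentially"
    using q order_tendstoD(1) by blast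
  have "(\<lambda>i. ennreal (- ln (q i))) \<longlonglongrightarrow> ennreal (- ln x)"
    by (intro tendsto_ennrealI tendsto_minus tendsto_ln q) (use False in auto)
  then show ?thesis
    using False by (simp add: L_def) (rule Lim_transform_eventually, use ev in \<open>auto elim: eventually_mono\<close>)
next
  case True
  have "L x = \<infinity>" using True by (simp add: L_def)
  moreover have "(\<lambda>i. L (q i)) \<longlonglongrightarrow> top"
  proof (rule tendsto_top_iff_ennreal[THEN iffD2], intro allI impI)
    fix y :: real assume "0 \<le> y"
    have "eventually (\<lambda>i. q i < exp (- y)) sequentially"
      using q True order_tendstoD(2) by force
    then show "eventually (\<lambda>i. ennreal y < L (q i)) sequentially"
    proof (rule eventually_mono)
      fix i assume "q i < exp (- y)"
      show "ennreal y < L (q i)"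
      proof (cases "q i = 0")
        case False
        then have "q i > 0" using pos(1)[of i] by linarith
        then have "ln (q i) < - y" using \<open>q i < exp (- y)\<close>
          by (metis ln_exp ln_less_cancel_iff exp_gt_zero)
        then show ?thesis using False \<open>0 \<le> y\<close> by (simp add: ennreal_lessI L_def)
      qed (simp add: L_def)
    qed
  qed
  ultimately show ?thesis by simp
qed


definition qq :: "'w measure \<Rightarrow> ('w \<Rightarrow> 's set) \<Rightarrow> 's set \<Rightarrow> real" where
  "qq P \<pi> A = measure P {\<omega>\<in>space P. \<pi> \<omega> \<inter> A = {}}"

lemma qq_bounds: "prob_space P \<Longrightarrow> 0 \<le> qq P \<pi> A \<and> qq P \<pi> A \<le> 1"
  unfolding qq_def by (simp add: prob_space.prob_le_1)

lemma hit_eq: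
  assumes "prob_space P" "cr_set P M \<pi>" "A \<in> sets M"
  shows "neglog1m (hitting P \<pi> A) = L (qq P \<pi> A)"
proof -
  have "{\<omega> \<in> space P. \<pi> \<omega> \<inter> A \<noteq> {}} = space P - {\<omega>\<in>space P. \<pi> \<omega> \<inter> A = {}}" by auto
  then have "hitting P \<pi> A = 1 - qq P \<pi> A"
    unfolding hitting_def qq_def
    using prob_space.prob_compl[OF assms(1) ev_E[OF assms(2,3)]] by simp
  then show ?thesis by (simp add: neglog1m_def L_def)
qed

lemma qq_union:
  assumes "prob_space P" "cr_set P M \<pi>" "indep_increments P M \<pi>"
    "A \<in> sets M" "B \<in> sets M" "A \<inter> B = {}"
  shows "qq P \<pi> (A \<union> B) = qq P \<pi> A * qq P \<pi> B"
proof -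
  define F where "F = (\<lambda>i::nat. if i = 0 then A else B)"
  have "\<forall>i<2. F i \<in> sets M" using assms by (simp add: F_def)
  moreover have "disjoint_family_on F {..<2}"
    using assms(6) by (auto simp: disjoint_family_on_def F_def)
  ultimately have ind: "prob_space.indep_vars P (\<lambda>_. count_space (UNIV :: enat set))
          (\<lambda>i \<omega>. Ncount (F i) (\<pi> \<omega>)) {..<2}"
    using assms(3) unfolding indep_increments_def by blast
  have "measure P (\<Inter>i\<in>{..<2}. (\<lambda>\<omega>. Ncount (F i) (\<pi> \<omega>)) -` {0} \<inter> space P)
     = (\<Prod>i\<in>{..<2}. measure P ((\<lambda>\<omega>. Ncount (F i) (\<pi> \<omega>)) -` {0} \<inter> space P))"
    by (rule prob_space.indep_varsD[OF assms(1) ind]) (auto simp: lessThan_empty_iff)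
  moreover have "{..<2::nat} = {0,1}" by auto
  ultimately have "measure P ((\<lambda>\<omega>. Ncount A (\<pi> \<omega>)) -` {0} \<inter> space P \<inter> ((\<lambda>\<omega>. Ncount B (\<pi> \<omega>)) -` {0} \<inter> space P))
     = measure P ((\<lambda>\<omega>. Ncount A (\<pi> \<omega>)) -` {0} \<inter> space P) * measure P ((\<lambda>\<omega>. Ncount B (\<pi> \<omega>)) -` {0} \<inter> space P)"
    by (simp add: F_def)
  moreover have "(\<lambda>\<omega>. Ncount A (\<pi> \<omega>)) -` {0} \<inter> space P \<inter> ((\<lambda>\<omega>. Ncount B (\<pi> \<omega>)) -` {0} \<inter> space P)
     = {\<omega>\<in>space P. \<pi> \<omega> \<inter> (A \<union> B) = {}}"
    by (auto simp: Ncount_0)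
  moreover have "\<And>C. (\<lambda>\<omega>. Ncount C (\<pi> \<omega>)) -` {0} \<inter> space P = {\<omega>\<in>space P. \<pi> \<omega> \<inter> C = {}}"
    by (auto simp: Ncount_0)
  ultimately show ?thesis unfolding qq_def by simp
qed

lemma nu_ca:
  fixes M :: "'s measure" and P :: "'w measure" and \<pi> :: "'w \<Rightarrow> 's set"
  assumes "prob_space P" "cr_set P M \<pi>" "indep_increments P M \<pi>"
  shows "countably_additive (sets M) (\<lambda>A. neglog1m (hitting P \<pi> A))"
proof -
  let ?f = "\<lambda>A. neglog1m (hitting P \<pi> A)"
  have pos: "positive (sets M) ?f"
  proof -
    have "qq P \<pi> {} = 1" unfolding qq_def using prob_space.prob_space[OF assms(1)] by simp
    then show ?thesis unfolding positive_def using hit_eq[OF assms(1,2), of "{}"] by simp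
  qed
  have add: "additive (sets M) ?f"
    unfolding additive_def
  proof safe
    fix x y assume xy: "x \<in> sets M" "y \<in> sets M" "x \<inter> y = {}"
    then show "?f (x \<union> y) = ?f x + ?f y"
      using hit_eq[OF assms(1,2)] qq_union[OF assms xy] L_mult[of "qq P \<pi> x" "qq P \<pi> y"] qq_bounds[OF assms(1), of \<pi>]
      by simp
  qed
  show ?thesis
    unfolding sets.countably_additive_iff_continuous_from_below[OF pos add]
  proof safe
    fix A :: "nat \<Rightarrow> 's set" assume A: "range A \<subseteq> sets M" "incseq A" "\<Union> (range A) \<in> sets M"
    let ?E = "\<lambda>C. {\<omega>\<in>space P. \<pi> \<omega> \<inter> C = {}}"
    have "range (\<lambda>i. ?E (A i)) \<subseteq> sets P" using A ev_E[OF assms(2)] by auto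
    moreover have "decseq (\<lambda>i. ?E (A i))" using A(2) by (auto simp: incseq_def decseq_def)
    ultimately have "(\<lambda>i. measure P (?E (A i))) \<longlonglongrightarrow> measure P (\<Inter>i. ?E (A i))"
      using finite_measure.finite_Lim_measure_decseq[of P] assms(1)
      by (simp add: prob_space_def)
    moreover have "(\<Inter>i. ?E (A i)) = ?E (\<Union> (range A))"
      using prob_space.not_empty[OF assms(1)] by auto
    ultimately have "(\<lambda>i. qq P \<pi> (A i)) \<longlonglongrightarrow> qq P \<pi> (\<Union> (range A))"
      by (simp add: qq_def)
    then have "(\<lambda>i. L (qq P \<pi> (A i))) \<longlonglongrightarrow> L (qq P \<pi> (\<Union> (range A)))"
      by (rule L_tendsto) (use qq_bounds[OF assms(1)] in auto)
    then show "(\<lambda>i. ?f (A i)) \<longlonglongrightarrow> ?f (\<Union> (range A))"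
      using hit_eq[OF assms(1,2)] A by auto
  qed
qed


lemma suminf_swap_ennreal: "(\<Sum>i. \<Sum>k. (f i k :: ennreal)) = (\<Sum>k. \<Sum>i. f i k)"
proof -
  have "(\<Sum>i. \<Sum>k. f i k) = (\<integral>\<^sup>+ i. (\<Sum>k. f i k) \<partial>count_space UNIV)"
    by (simp add: nn_integral_count_space_nat)
  also have "\<dots> = (\<Sum>k. \<integral>\<^sup>+ i. f i k \<partial>count_space UNIV)"
    by (rule nn_integral_suminf) simp
  also have "\<dots> = (\<Sum>k. \<Sum>i. f i k)"
    by (simp add: nn_integral_count_space_nat)
  finally show ?thesis .
qed

definition W :: "nat \<Rightarrow> enat \<Rightarrow> ennreal" where
  "W k n = ennreal ((1/2)^k / (1 + real (the_enat n)))"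

definition hh :: "'s measure \<Rightarrow> (nat \<Rightarrow> 'w \<Rightarrow> 's set) \<Rightarrow> 's set \<Rightarrow> 'w \<Rightarrow> ennreal" where
  "hh M \<pi>s A \<omega> = (\<Sum>k. W k (Ncount (space M) (\<pi>s k \<omega>)) * ennreal_of_enat (Ncount A (\<pi>s k \<omega>)))"

lemma Ncount_em: "ennreal_of_enat (Ncount A X) = emeasure (count_space UNIV) (A \<inter> X)"
  by (simp add: Ncount_def)

lemma hh_meas:
  assumes "\<And>k. cr_set P M (\<pi>s k)" "A \<in> sets M"
  shows "hh M \<pi>s A \<in> borel_measurable P"
proof -
  have m1: "(\<lambda>\<omega>. W k (Ncount (space M) (\<pi>s k \<omega>))) \<in> borel_measurable P" for k
    by (rule measurable_compose[OF meas_N[OF assms(1) sets.top]]) simp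
  have m2: "(\<lambda>\<omega>. ennreal_of_enat (Ncount A (\<pi>s k \<omega>))) \<in> borel_measurable P" for k
    by (rule measurable_compose[OF meas_N[OF assms(1) assms(2)]]) simp
  show ?thesis unfolding hh_def
    using m1 m2 by measurable
qed

lemma hh_ca:
  assumes "disjoint_family F"
  shows "(\<Sum>i. hh M \<pi>s (F i) \<omega>) = hh M \<pi>s (\<Union>i. F i) \<omega>"
proof -
  have e: "(\<Sum>i. ennreal_of_enat (Ncount (F i) X)) = ennreal_of_enat (Ncount (\<Union>i. F i) X)" for X
  proof -
    have "(\<Sum>i. ennreal_of_enat (Ncount (F i) X)) = (\<Sum>i. emeasure (count_space UNIV) (F i \<inter> X))"
      by (simp add: Ncount_em)
    also have "\<dots> = emeasure (count_space UNIV) (\<Union>i. F i \<inter> X)"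
      by (rule suminf_emeasure) (use assms in \<open>auto simp: disjoint_family_on_def\<close>)
    also have "(\<Union>i. F i \<inter> X) = (\<Union>i. F i) \<inter> X" by auto
    finally show ?thesis by (simp add: Ncount_em)
  qed
  show ?thesis unfolding hh_def
    by (subst suminf_swap_ennreal) (simp add: e)
qed

lemma hh_le:
  assumes "\<And>k. finite (\<pi>s k \<omega>)" "\<And>k. \<pi>s k \<omega> \<subseteq> space M"
  shows "hh M \<pi>s A \<omega> \<le> 2"
proof -
  have t: "W k (Ncount (space M) (\<pi>s k \<omega>)) * ennreal_of_enat (Ncount A (\<pi>s k \<omega>)) \<le> ennreal ((1/2)^k)" for k
  proof -
    let ?X = "\<pi>s k \<omega>"
    have f: "finite (A \<inter> ?X)" "finite (space M \<inter> ?X)" using assms(1)[of k] by auto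
    have c: "card (A \<inter> ?X) \<le> card (space M \<inter> ?X)"
      using assms(2)[of k] f by (intro card_mono) auto
    have "W k (Ncount (space M) ?X) * ennreal_of_enat (Ncount A ?X)
        = ennreal ((1/2)^k / (1 + real (card (space M \<inter> ?X))) * real (card (A \<inter> ?X)))"
      using f by (simp add: W_def Ncount_def ennreal_mult''[symmetric] ennreal_of_nat_eq_real_of_nat del: times_divide_eq_left)
    also have "\<dots> \<le> ennreal ((1/2)^k)"
    proof (intro ennreal_leI)
      have "real (card (A \<inter> ?X)) \<le> 1 + real (card (space M \<inter> ?X))" using c by simp
      then have "real (card (A \<inter> ?X)) / (1 + real (card (space M \<inter> ?X))) \<le> 1"
        by (simp add: divide_le_eq_1)
      then have "(1/2)^k * (real (card (A \<inter> ?X)) / (1 + real (card (space M \<inter> ?X)))) \<le> (1/2)^k * 1"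
        by (intro mult_left_mono) auto
      then show "(1/2)^k / (1 + real (card (space M \<inter> ?X))) * real (card (A \<inter> ?X)) \<le> (1/2)^k"
        by (simp add: field_simps)
    qed
    finally show ?thesis .
  qed
  have "hh M \<pi>s A \<omega> \<le> (\<Sum>k. ennreal ((1/2)^k))"
    unfolding hh_def by (intro suminf_le t) auto
  also have "\<dots> = ennreal (\<Sum>k. (1/2)^k)"
    by (intro suminf_ennreal2) (auto simp: summable_geometric)
  also have "(\<Sum>k. (1/2::real)^k) = 2" using suminf_geometric[of "1/2::real"] by simp
  finally show ?thesis by simp
qed

lemma hh_zero:
  assumes "hh M \<pi>s A \<omega> = 0"
  shows "A \<inter> \<pi>s k \<omega> = {}"
proof -
  have "W k (Ncount (space M) (\<pi>s k \<omega>)) * ennreal_of_enat (Ncount A (\<pi>s k \<omega>)) = 0"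
    using assms unfolding hh_def by (metis (mono_tags) suminf_eq_zero_iff summableI zero_le)
  moreover have "W k n \<noteq> 0" for n
    by (simp add: W_def)
  ultimately have "Ncount A (\<pi>s k \<omega>) = 0" by (metis ennreal_of_enat_0 ennreal_of_enat_inj mult_eq_0_iff)
  then show ?thesis by (simp add: Ncount_0)
qed


lemma partial_min: "(\<Sum>n<N. min 1 (x - of_nat n)) = min x (of_nat N :: ennreal)"
proof (induction N)
  case 0 then show ?case by simp
next
  case (Suc N)
  have "min x (of_nat N) + min 1 (x - of_nat N) = min x (of_nat (Suc N))"
  proof (cases "x \<le> of_nat N")
    case True
    have "x \<noteq> top" using True ennreal_of_nat_neq_top[of N] by (auto simp: top_unique)
    then have "x - of_nat N = 0" using True by (simp add: diff_eq_0_iff_ennreal less_top)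
    moreover have "x \<le> of_nat (Suc N)" using True
      by (metis le_SucI of_nat_le_iff order_trans order_refl)
    ultimately show ?thesis using True by simp
  next
    case False
    then have le: "of_nat N \<le> x" by simp
    define d where "d = x - of_nat N"
    have x: "x = of_nat N + d" unfolding d_def using le by (simp add: add_diff_inverse_ennreal)
    have s: "(of_nat (Suc N) :: ennreal) = of_nat N + 1" by simp
    show ?thesis
    proof (cases "d \<le> 1")
      case True
      then have "of_nat N + d \<le> of_nat N + (1::ennreal)" by (rule add_left_mono)
      then show ?thesis using True le unfolding x s d_def[symmetric] by simp
    next
      case False
      then have "of_nat N + 1 \<le> of_nat N + (d::ennreal)" by (intro add_left_mono) simp
      then show ?thesis using False le unfolding x s d_def[symmetric] by simp
    qed
  qed
  then show ?case using Suc by simp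
qed

lemma suminf_min: "(\<Sum>n. min 1 (x - of_nat n)) = (x :: ennreal)"
proof -
  have "(\<Sum>n. min 1 (x - of_nat n)) = (SUP N. \<Sum>n<N. min 1 (x - of_nat n))"
    by (rule suminf_eq_SUP)
  also have "\<dots> = (SUP N. inf x (of_nat N))" by (simp add: partial_min inf_min)
  also have "\<dots> = inf x (SUP N. of_nat N)" by (simp add: inf_SUP)
  also have "(SUP N. of_nat N :: ennreal) = top" by (rule ennreal_SUP_of_nat_eq_top)
  finally show ?thesis by simp
qed


theorem proposition6p9:
  fixes M :: "'s measure" and P :: "'w measure" and \<pi> :: "'w \<Rightarrow> 's set"
  assumes "prob_space P"
    and "{(x, x) | x. x \<in> space M} \<in> sets (M \<Otimes>\<^sub>M M)"
    and "cr_set P M \<pi>"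
    and "constructive P M \<pi>"
    and "indep_increments P M \<pi>"
  shows "\<exists>\<mu> :: nat \<Rightarrow> 's measure.
           (\<forall>n. finite_measure (\<mu> n) \<and> sets (\<mu> n) = sets M) \<and>
           (\<forall>A\<in>sets M. neglog1m (hitting P \<pi> A) = (\<Sum>n. emeasure (\<mu> n) A))"
proof -
  interpret P: prob_space P by fact
  obtain \<pi>s :: "nat \<Rightarrow> 'w \<Rightarrow> 's set" where fin: "\<And>k. finite_cr_set P M (\<pi>s k)"
    and un: "\<And>\<omega>. \<omega> \<in> space P \<Longrightarrow> \<pi> \<omega> = (\<Union>k. \<pi>s k \<omega>)"
    using assms(4) unfolding constructive_def by blast
  have cr: "cr_set P M (\<pi>s k)" for k using fin by (simp add: finite_cr_set_def)
  have finw: "\<And>k \<omega>. \<omega> \<in> space P \<Longrightarrow> finite (\<pi>s k \<omega>)" using fin by (simp add: finite_cr_set_def)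
  have subw: "\<And>k \<omega>. \<omega> \<in> space P \<Longrightarrow> \<pi>s k \<omega> \<subseteq> space M" using pi_sub(1)[OF cr] by blast
  let ?lf = "\<lambda>A. \<integral>\<^sup>+\<omega>. hh M \<pi>s A \<omega> \<partial>P"
  define lam where "lam = measure_of (space M) (sets M) ?lf"
  have lpos: "positive (sets M) ?lf"
  proof -
    have "hh M \<pi>s {} = (\<lambda>_. 0)" by (simp add: hh_def Ncount_def fun_eq_iff)
    then show ?thesis unfolding positive_def by simp
  qed
  have lca: "countably_additive (sets M) ?lf"
    unfolding countably_additive_def
  proof safe
    fix A :: "nat \<Rightarrow> 's set" assume A: "range A \<subseteq> sets M" "disjoint_family A" "\<Union> (range A) \<in> sets M"
    have "(\<Sum>i. ?lf (A i)) = (\<integral>\<^sup>+\<omega>. (\<Sum>i. hh M \<pi>s (A i) \<omega>) \<partial>P)"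
      by (rule nn_integral_suminf[symmetric]) (use A in \<open>auto intro: hh_meas[OF cr]\<close>)
    also have "\<dots> = ?lf (\<Union> (range A))" by (simp add: hh_ca[OF A(2)])
    finally show "(\<Sum>i. ?lf (A i)) = ?lf (\<Union> (range A))" .
  qed
  have eml: "\<And>A. A \<in> sets M \<Longrightarrow> emeasure lam A = ?lf A"
    unfolding lam_def by (rule emeasure_measure_of_sigma[OF sets.sigma_algebra_axioms lpos lca])
  have sl: "sets lam = sets M" and spl: "space lam = space M" by (simp_all add: lam_def)
  have "emeasure lam (space lam) \<le> 2"
  proof -
    have "emeasure lam (space lam) = ?lf (space M)" using eml spl by simp
    also have "\<dots> \<le> (\<integral>\<^sup>+\<omega>. 2 \<partial>P)"
      by (intro nn_integral_mono hh_le finw subw)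
    also have "\<dots> = 2" by (simp add: P.emeasure_space_1)
    finally show ?thesis .
  qed
  then have "emeasure lam (space lam) \<noteq> \<infinity>"
    by (auto simp: top_unique)
  then interpret lam: finite_measure lam by (rule finite_measureI)

  let ?nf = "\<lambda>A. neglog1m (hitting P \<pi> A)"
  define nu where "nu = measure_of (space M) (sets M) ?nf"
  have npos: "positive (sets M) ?nf" unfolding positive_def hitting_def by (simp add: neglog1m_def)
  have emn: "\<And>A. A \<in> sets M \<Longrightarrow> emeasure nu A = ?nf A"
    unfolding nu_def by (rule emeasure_measure_of_sigma[OF sets.sigma_algebra_axioms npos nu_ca[OF assms(1,3,5)]])
  have sn: "sets nu = sets M" by (simp add: nu_def)
  have ac: "absolutely_continuous lam nu"
    unfolding absolutely_continuous_def
  proof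
    fix A assume "A \<in> null_sets lam"
    then have A: "A \<in> sets M" "?lf A = 0" using eml sl by (auto simp: null_sets_def)
    then have "AE \<omega> in P. hh M \<pi>s A \<omega> = 0"
      using nn_integral_0_iff_AE[OF hh_meas[OF cr A(1)]] by simp
    then have "AE \<omega> in P. \<pi> \<omega> \<inter> A = {}"
      using AE_space
    proof eventually_elim
      case (elim \<omega>)
      then show ?case using hh_zero[of M \<pi>s A \<omega>] un[of \<omega>] by blast
    qed
    moreover have meas: "{\<omega>\<in>space P. \<pi> \<omega> \<inter> A \<noteq> {}} \<in> sets P"
    proof -
      have "{\<omega>\<in>space P. \<pi> \<omega> \<inter> A \<noteq> {}} = space P - {\<omega>\<in>space P. \<pi> \<omega> \<inter> A = {}}" by auto
      then show ?thesis using ev_E[OF assms(3) A(1)] by auto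
    qed
    ultimately have "emeasure P {\<omega>\<in>space P. \<pi> \<omega> \<inter> A \<noteq> {}} = 0"
      using AE_iff_measurable[OF meas, of "\<lambda>\<omega>. \<pi> \<omega> \<inter> A = {}"] by auto
    then have "hitting P \<pi> A = 0" by (simp add: hitting_def measure_def)
    then show "A \<in> null_sets nu" using emn A sn by (simp add: null_sets_def neglog1m_def)
  qed
  obtain f where fm: "f \<in> borel_measurable lam" and fd: "density lam f = nu"
    using lam.Radon_Nikodym[OF ac] sn sl by auto
  define \<mu> where "\<mu> = (\<lambda>n::nat. density lam (\<lambda>x. min 1 (f x - of_nat n)))"
  have "finite_measure (\<mu> n) \<and> sets (\<mu> n) = sets M" for n
  proof
    show "sets (\<mu> n) = sets M" by (simp add: \<mu>_def sl)
    have "emeasure (\<mu> n) (space (\<mu> n)) = (\<integral>\<^sup>+x. min 1 (f x - of_nat n) * indicator (space lam) x \<partial>lam)"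
      unfolding \<mu>_def using fm by (simp add: emeasure_density)
    also have "\<dots> \<le> (\<integral>\<^sup>+x. indicator (space lam) x \<partial>lam)"
      by (intro nn_integral_mono) (auto simp: indicator_def)
    also have "\<dots> = emeasure lam (space lam)" by simp
    also have "\<dots> < \<infinity>" using lam.emeasure_finite[of "space lam"] by (simp add: less_top[symmetric])
    finally show "finite_measure (\<mu> n)" by (intro finite_measureI) simp
  qed
  moreover have "neglog1m (hitting P \<pi> A) = (\<Sum>n. emeasure (\<mu> n) A)" if A: "A \<in> sets M" for A
  proof -
    have "neglog1m (hitting P \<pi> A) = emeasure (density lam f) A" using emn A fd by simp
    also have "\<dots> = (\<integral>\<^sup>+x. f x * indicator A x \<partial>lam)"
      using fm A sl by (simp add: emeasure_density)
    also have "\<dots> = (\<integral>\<^sup>+x. (\<Sum>n. min 1 (f x - of_nat n) * indicator A x) \<partial>lam)"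
      by (simp add: suminf_min)
    also have "\<dots> = (\<Sum>n. \<integral>\<^sup>+x. min 1 (f x - of_nat n) * indicator A x \<partial>lam)"
    proof (rule nn_integral_suminf)
      have [measurable]: "f \<in> borel_measurable lam" "A \<in> sets lam" using fm A sl by auto
      show "(\<lambda>x. min 1 (f x - of_nat n) * indicator A x) \<in> borel_measurable lam" for n
        by measurable
    qed
    also have "\<dots> = (\<Sum>n. emeasure (\<mu> n) A)"
      unfolding \<mu>_def using fm A sl by (simp add: emeasure_density)
    finally show ?thesis .
  qed
  ultimately show ?thesis by blast
qed

end
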